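(* Let $H=(V,E,\omega,d)$ be a generalized hypergraph with $V=\{1,\dots,n\}$. For every $\rho\in R_n$ there exist vectors $v_1(z),\dots,v_k(z)\in K(z)^n$, whose entries have no pole at any positive real $z$, such that for every $\lambda>0$ $$\overline{G_\lambda(U_\rho)}=\sum_{i=1}^k\mathbb{R}_{\ge0}\,v_i(\lambda),$$ where $G_\lambda(U_\rho)=\bigcup_{f\in U_\rho}G_\lambda(f)$ and the bar denotes topological closure in $\mathbb{R}^n$.
   Context: A generalized hypergraph $H=(V,E,\omega,d)$ consists of a finite set $V=\{1,\dots,n\}$, a set $E$ of nonempty subsets of $V$, a function $\omega\colon E\to\mathbb{R}_{>0}$ and a function $d\colon V\to\mathbb{R}_{>0}$, $x\mapsto d_x$ (no relation between $d$ and $\omega$ is assumed). Functions $V\to\mathbb{R}$ are identified with vectors $f=(f_1,\dots,f_n)^\top\in\mathbb{R}^n$; $\delta_x$ is the $x$-th standard basis vector. For $e\in E$, $B_e=\mathrm{Conv}\{\delta_x-\delta_y : x,y\in e\}$, and $L(f)=\{\sum_{e\in E}\omega_e\mathtt{b}_e(\mathtt{b}_e^\top f) : \mathtt{b}_e\in\operatorname{argmax}_{\mathtt b\in B_e}\mathtt b^\top f\}\subset\mathbb{R}^n$. $D=\mathrm{diag}(d_1,\dots,d_n)$. $\mathbb{R}^n=\bigsqcup_{\rho\in R_n}U_\rho$ is the partition into order-pattern classes: $f,g$ lie in the same $U_\rho$ iff $\mathrm{sgn}(f_x-f_y)=\mathrm{sgn}(g_x-g_y)$ for all $x,y\in V$.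 $K=\mathbb{Q}(\{\omega_e\}_{e\in E},\{d_x\}_{x\in V})\subset\mathbb{R}$, and $K(z)$ is the field of rational functions in $z$ over $K$. For $\lambda>0$, $G_\lambda(f)=(D+\lambda L)(f)=\{Df+\lambda v: v\in L(f)\}$. *)

theory Defs
  imports "HOL-Analysis.Analysis" "HOL-Computational_Algebra.Polynomial"
begin

text \<open>Vertex set V = {1..n} is represented by a finite type 'n; functions V -> R are
  vectors of type real^'n.\<close>

definition is_gen_hypergraph :: "'n::finite set set \<Rightarrow> ('n set \<Rightarrow> real) \<Rightarrow> ('n \<Rightarrow> real) \<Rightarrow> bool" where
  "is_gen_hypergraph E w d \<longleftrightarrow> (\<forall>e\<in>E. e \<noteq> {} \<and> w e > 0) \<and> (\<forall>x. d x > 0)"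

definition Bset :: "'n::finite set \<Rightarrow> (real^'n) set" where
  "Bset e = convex hull {axis x 1 - axis y 1 | x y. x \<in> e \<and> y \<in> e}"

definition argmaxB :: "'n::finite set \<Rightarrow> real^'n \<Rightarrow> (real^'n) set" where
  "argmaxB e f = {b \<in> Bset e. \<forall>b'\<in>Bset e. b' \<bullet> f \<le> b \<bullet> f}"

definition Lap :: "'n::finite set set \<Rightarrow> ('n set \<Rightarrow> real) \<Rightarrow> real^'n \<Rightarrow> (real^'n) set" where
  "Lap E w f = {(\<Sum>e\<in>E. w e *\<^sub>R ((b e \<bullet> f) *\<^sub>R b e)) | b. \<forall>e\<in>E. b e \<in> argmaxB e f}"

definition Dmat :: "('n::finite \<Rightarrow> real) \<Rightarrow> real^'n \<Rightarrow> real^'n" where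
  "Dmat d f = (\<chi> x. d x * f $ x)"

definition Gop :: "'n::finite set set \<Rightarrow> ('n set \<Rightarrow> real) \<Rightarrow> ('n \<Rightarrow> real) \<Rightarrow> real \<Rightarrow> real^'n \<Rightarrow> (real^'n) set" where
  "Gop E w d lam f = {Dmat d f + lam *\<^sub>R v | v. v \<in> Lap E w f}"

definition order_classes :: "(real^'n::finite) set set" where
  "order_classes = {{g. \<forall>x y. sgn (g $ x - g $ y) = sgn (f $ x - f $ y)} | f. True}"

definition real_subfield :: "real set \<Rightarrow> bool" where
  "real_subfield S \<longleftrightarrow> 0 \<in> S \<and> 1 \<in> S \<and> (\<forall>a\<in>S. \<forall>b\<in>S. a + b \<in> S \<and> a * b \<in> S \<and> - a \<in> S)
     \<and> (\<forall>a\<in>S. a \<noteq> 0 \<longrightarrow> inverse a \<in> S)"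

definition Kfield :: "'n::finite set set \<Rightarrow> ('n set \<Rightarrow> real) \<Rightarrow> ('n \<Rightarrow> real) \<Rightarrow> real set" where
  "Kfield E w d = \<Inter>{S. real_subfield S \<and> w ` E \<subseteq> S \<and> range d \<subseteq> S}"

definition poly_over :: "real set \<Rightarrow> real poly \<Rightarrow> bool" where
  "poly_over S p \<longleftrightarrow> (\<forall>j. coeff p j \<in> S)"

end

theory Submission
  imports Defs
begin

lemma hull_sum:
  fixes b :: "'e \<Rightarrow> 'v::real_vector" and V :: "'e \<Rightarrow> 'v set"
  assumes "finite E"
  shows "(\<forall>e\<in>E. b e \<in> convex hull (V e)) \<Longrightarrow>
    (\<Sum>e\<in>E. s e *\<^sub>R b e) \<in> convex hull ((\<lambda>p. \<Sum>e\<in>E. s e *\<^sub>R p e) ` PiE E V)"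
  using assms
proof (induction E rule: finite_induct)
  case empty
  then show ?case by (simp add: hull_inc)
next
  case (insert e E)
  have IH: "(\<Sum>e\<in>E. s e *\<^sub>R b e) \<in> convex hull ((\<lambda>p. \<Sum>e\<in>E. s e *\<^sub>R p e) ` PiE E V)"
    using insert.IH insert.prems by blast
  have "b e \<in> convex hull (V e)" using insert.prems by blast
  then have h1: "s e *\<^sub>R b e \<in> convex hull ((\<lambda>x. s e *\<^sub>R x) ` V e)"
    unfolding convex_hull_scaling by (rule imageI)
  have "s e *\<^sub>R b e + (\<Sum>e\<in>E. s e *\<^sub>R b e) \<in> convex hull ((\<lambda>x. s e *\<^sub>R x) ` V e) + convex hull ((\<lambda>p. \<Sum>e\<in>E. s e *\<^sub>R p e) ` PiE E V)"
    using h1 IH by (rule set_plus_intro)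
  also have "\<dots> = convex hull ((\<lambda>x. s e *\<^sub>R x) ` V e + (\<lambda>p. \<Sum>e\<in>E. s e *\<^sub>R p e) ` PiE E V)"
    by (rule convex_hull_set_plus[symmetric])
  also have "\<dots> \<subseteq> convex hull ((\<lambda>p. \<Sum>e\<in>insert e E. s e *\<^sub>R p e) ` PiE (insert e E) V)"
  proof (rule hull_mono, rule subsetI)
    fix z assume "z \<in> (\<lambda>x. s e *\<^sub>R x) ` V e + (\<lambda>p. \<Sum>e\<in>E. s e *\<^sub>R p e) ` PiE E V"
    then obtain u t where z: "z = u + t" and u: "u \<in> (\<lambda>x. s e *\<^sub>R x) ` V e"
      and t: "t \<in> (\<lambda>p. \<Sum>e\<in>E. s e *\<^sub>R p e) ` PiE E V" by (rule set_plus_elim)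
    obtain v where v: "v \<in> V e" "u = s e *\<^sub>R v" using u by blast
    obtain p where p: "p \<in> PiE E V" "t = (\<Sum>e\<in>E. s e *\<^sub>R p e)" using t by blast
    have p': "p(e := v) \<in> PiE (insert e E) V" unfolding PiE_insert_eq
      by (rule image_eqI[where x="(v, p)"]) (use v(1) p(1) in auto)
    have "(\<Sum>e'\<in>E. s e' *\<^sub>R (p(e := v)) e') = (\<Sum>e'\<in>E. s e' *\<^sub>R p e')"
      by (rule sum.cong) (use insert.hyps(2) in auto)
    then have "(\<Sum>e'\<in>insert e E. s e' *\<^sub>R (p(e := v)) e') = z"
      using insert.hyps z v(2) p(2) by simp
    then have zz: "z = (\<lambda>p. \<Sum>e\<in>insert e E. s e *\<^sub>R p e) (p(e := v))" by simp
    show "z \<in> (\<lambda>p. \<Sum>e\<in>insert e E. s e *\<^sub>R p e) ` PiE (insert e E) V"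
      by (rule image_eqI[where x="p(e := v)"]) (use zz p' in auto)
  qed
  finally show ?case using insert.hyps by simp
qed

lemma cc_sum: assumes "convex_cone C" shows "finite I \<Longrightarrow> (\<forall>i\<in>I. v i \<in> C) \<Longrightarrow> sum v I \<in> C"
proof (induction I rule: finite_induct)
  case empty
  then show ?case using assms by (simp add: convex_cone_iff)
next
  case (insert x F)
  then show ?case using assms by (simp add: convex_cone_add)
qed

lemma sub_Ints: assumes "real_subfield S" shows "a \<in> \<int> \<Longrightarrow> a \<in> S"
proof -
  have "of_int n \<in> S" for n :: int
  proof (induction n rule: int_induct[where k=0])
    case base then show ?case using assms by (simp add: real_subfield_def)
  next
    case (step1 i)
    then show ?case using assms unfolding real_subfield_def by simp
  next
    case (step2 i)
    have "of_int (i - 1) = of_int i + - (1::real)" by simp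
    then show ?case using step2 assms unfolding real_subfield_def by metis
  qed
  then show "a \<in> \<int> \<Longrightarrow> a \<in> S" by (auto elim: Ints_cases)
qed

lemma sub_sum: assumes "real_subfield S" shows "(\<forall>i\<in>I. f i \<in> S) \<Longrightarrow> sum f I \<in> S"
proof (induction I rule: infinite_finite_induct)
  case (infinite A) then show ?case using assms by (simp add: real_subfield_def)
next
  case empty then show ?case using assms by (simp add: real_subfield_def)
next
  case (insert x F) then show ?case using assms by (simp add: real_subfield_def)
qed

lemma K_sub: "real_subfield (Kfield E w d)"
  unfolding real_subfield_def Kfield_def by (auto simp: real_subfield_def)

lemma K_w: "w ` E \<subseteq> Kfield E w d" unfolding Kfield_def by blast
lemma K_d: "range d \<subseteq> Kfield E w d" unfolding Kfield_def by blast

lemma cone_explicit: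
  fixes g :: "nat \<Rightarrow> 'a::real_vector"
  shows "convex_cone hull (g ` {..<k}) = {(\<Sum>i<k. c i *\<^sub>R g i) | c. \<forall>i<k. c i \<ge> 0}"
proof
  define X where "X = {(\<Sum>i<k. c i *\<^sub>R g i) | c. \<forall>i<k. c i \<ge> 0}"
  have "convex_cone X" unfolding convex_cone_iff
  proof (intro conjI ballI allI impI)
    show "0 \<in> X" unfolding X_def by (intro CollectI exI[of _ "\<lambda>i. 0"]) simp
  next
    fix x y assume "x \<in> X" "y \<in> X"
    then obtain c1 c2 where "x = (\<Sum>i<k. c1 i *\<^sub>R g i)" "\<forall>i<k. c1 i \<ge> 0"
      "y = (\<Sum>i<k. c2 i *\<^sub>R g i)" "\<forall>i<k. c2 i \<ge> 0" unfolding X_def by blast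
    then show "x + y \<in> X" unfolding X_def
      by (intro CollectI exI[of _ "\<lambda>i. c1 i + c2 i"]) (simp add: scaleR_add_left sum.distrib)
  next
    fix x and a :: real assume "x \<in> X" "a \<ge> 0"
    then obtain c1 where "x = (\<Sum>i<k. c1 i *\<^sub>R g i)" "\<forall>i<k. c1 i \<ge> 0" unfolding X_def by blast
    then show "a *\<^sub>R x \<in> X" unfolding X_def using \<open>a \<ge> 0\<close>
      by (intro CollectI exI[of _ "\<lambda>i. a * c1 i"]) (simp add: scaleR_sum_right)
  qed
  moreover have "g ` {..<k} \<subseteq> X"
  proof
    fix z assume "z \<in> g ` {..<k}"
    then obtain j where j: "j < k" "z = g j" by auto
    have "(\<Sum>i<k. (if i = j then 1 else 0) *\<^sub>R g i) = (\<Sum>i<k. (if i = j then g i else 0))"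
      by (rule sum.cong) auto
    also have "\<dots> = g j" using j(1) by simp
    finally show "z \<in> X" unfolding X_def j(2) by (intro CollectI exI[of _ "\<lambda>i. if i = j then 1 else 0"]) auto
  qed
  ultimately show "convex_cone hull (g ` {..<k}) \<subseteq> {(\<Sum>i<k. c i *\<^sub>R g i) | c. \<forall>i<k. c i \<ge> 0}"
    unfolding X_def[symmetric] by (intro hull_minimal[where S=convex_cone])
next
  show "{(\<Sum>i<k. c i *\<^sub>R g i) | c. \<forall>i<k. c i \<ge> 0} \<subseteq> convex_cone hull (g ` {..<k})"
  proof
    fix z assume "z \<in> {(\<Sum>i<k. c i *\<^sub>R g i) | c. \<forall>i<k. c i \<ge> 0}"
    then obtain c where z: "z = (\<Sum>i<k. c i *\<^sub>R g i)" "\<forall>i<k. c i \<ge> 0" by blast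
    have cc: "convex_cone (convex_cone hull (g ` {..<k}))" by (simp add: convex_cone_convex_cone_hull)
    have "\<forall>i\<in>{..<k}. c i *\<^sub>R g i \<in> convex_cone hull (g ` {..<k})"
    proof
      fix i assume i: "i \<in> {..<k}"
      have "g i \<in> convex_cone hull (g ` {..<k})" using i by (intro hull_inc) auto
      then show "c i *\<^sub>R g i \<in> convex_cone hull (g ` {..<k})" using cc z(2) i unfolding convex_cone_iff by auto
    qed
    then show "z \<in> convex_cone hull (g ` {..<k})" unfolding z(1) by (rule cc_sum[OF cc, rotated]) simp
  qed
qed

locale HG =
  fixes E :: "'n::finite set set" and w :: "'n set \<Rightarrow> real" and d :: "'n \<Rightarrow> real"
    and f0 :: "real^'n"
  assumes hg: "is_gen_hypergraph E w d"
begin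

definition "UU = {g::real^'n. \<forall>x y. sgn (g$x - g$y) = sgn (f0$x - f0$y)}"
definition "Ub = {g::real^'n. \<forall>x y. f0$x \<le> f0$y \<longrightarrow> g$x \<le> g$y}"
definition "Tp e = {x\<in>e. \<forall>y\<in>e. f0$y \<le> f0$x}"
definition "Bt e = {y\<in>e. \<forall>x\<in>e. f0$y \<le> f0$x}"
definition "xe e = (SOME x. x \<in> Tp e)"
definition "ye e = (SOME y. y \<in> Bt e)"
definition "ell e (g::real^'n) = g$(xe e) - g$(ye e)"
definition "Vs e = {(axis x 1 - axis y 1) :: real^'n | x y. x \<in> Tp e \<and> y \<in> Bt e}"
definition "AA e = convex hull (Vs e :: (real^'n) set)"

lemma finE: "finite E" by (rule finite_subset[of _ UNIV]) auto

lemma Tp_ne: assumes "e \<in> E" shows "\<exists>x. x \<in> Tp e"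
proof -
  have ne: "e \<noteq> {}" using hg assms by (auto simp: is_gen_hypergraph_def)
  have fe: "finite e" by simp
  define M where "M = Max ((\<lambda>x. f0$x) ` e)"
  have "M \<in> (\<lambda>x. f0$x) ` e" unfolding M_def using ne fe by (intro Max_in) auto
  then obtain x where "x \<in> e" "f0$x = M" by auto
  moreover have "\<forall>y\<in>e. f0$y \<le> M" unfolding M_def using fe by auto
  ultimately show ?thesis unfolding Tp_def by auto
qed

lemma Bt_ne: assumes "e \<in> E" shows "\<exists>x. x \<in> Bt e"
proof -
  have ne: "e \<noteq> {}" using hg assms by (auto simp: is_gen_hypergraph_def)
  have fe: "finite e" by simp
  define M where "M = Min ((\<lambda>x. f0$x) ` e)"
  have "M \<in> (\<lambda>x. f0$x) ` e" unfolding M_def using ne fe by (intro Min_in) auto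
  then obtain x where "x \<in> e" "f0$x = M" by auto
  moreover have "\<forall>y\<in>e. M \<le> f0$y" unfolding M_def using fe by auto
  ultimately show ?thesis unfolding Bt_def by auto
qed

lemma xe_in: "e \<in> E \<Longrightarrow> xe e \<in> Tp e"
  unfolding xe_def using Tp_ne by (metis someI_ex)
lemma ye_in: "e \<in> E \<Longrightarrow> ye e \<in> Bt e"
  unfolding ye_def using Bt_ne by (metis someI_ex)

lemma Ub_Tp: assumes "g \<in> Ub" "e \<in> E" "x \<in> Tp e" shows "g$x = g$(xe e)"
proof -
  have a: "xe e \<in> Tp e" by (rule xe_in[OF assms(2)])
  have "f0$x = f0$(xe e)" using a assms(3) unfolding Tp_def by fastforce
  then have "g$x \<le> g$(xe e)" "g$(xe e) \<le> g$x" using assms(1) unfolding Ub_def by auto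
  then show ?thesis by linarith
qed

lemma Ub_Bt: assumes "g \<in> Ub" "e \<in> E" "x \<in> Bt e" shows "g$x = g$(ye e)"
proof -
  have a: "ye e \<in> Bt e" by (rule ye_in[OF assms(2)])
  have "f0$x = f0$(ye e)" using a assms(3) unfolding Bt_def by fastforce
  then have "g$x \<le> g$(ye e)" "g$(ye e) \<le> g$x" using assms(1) unfolding Ub_def by auto
  then show ?thesis by linarith
qed

lemma ell_nonneg: assumes "g \<in> Ub" "e \<in> E" shows "ell e g \<ge> 0"
proof -
  have "f0$(ye e) \<le> f0$(xe e)" using xe_in[OF assms(2)] ye_in[OF assms(2)] unfolding Tp_def Bt_def by auto
  then show ?thesis using assms(1) unfolding Ub_def ell_def by auto
qed

lemma ell_add: "ell e (f + g) = ell e f + ell e g" by (simp add: ell_def)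
lemma ell_scale: "ell e (c *\<^sub>R f) = c * ell e f" by (simp add: ell_def algebra_simps)

lemma inner_ax: "(axis x 1 - axis y 1) \<bullet> (g::real^'n) = g$x - g$y"
  by (simp add: inner_diff_left inner_axis')

lemma convex_hp: "convex {z::real^'n. z \<bullet> g = c}"
proof -
  have "{z::real^'n. z \<bullet> g = c} = {z. g \<bullet> z = c}" by (auto simp: inner_commute)
  then show ?thesis using convex_hyperplane[of g c] by simp
qed

lemma AA_inner: assumes "g \<in> Ub" "e \<in> E" "b \<in> AA e" shows "b \<bullet> g = ell e g"
proof -
  have "Vs e \<subseteq> {z. z \<bullet> g = ell e g}"
  proof
    fix z :: "real^'n" assume "z \<in> Vs e"
    then obtain x y where z: "z = axis x 1 - axis y 1" "x \<in> Tp e" "y \<in> Bt e" unfolding Vs_def by blast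
    have "g$x = g$(xe e)" by (rule Ub_Tp[OF assms(1,2) z(2)])
    moreover have "g$y = g$(ye e)" by (rule Ub_Bt[OF assms(1,2) z(3)])
    ultimately show "z \<in> {z. z \<bullet> g = ell e g}" unfolding z(1) by (simp add: inner_ax ell_def)
  qed
  then have "AA e \<subseteq> {z. z \<bullet> g = ell e g}" unfolding AA_def
    by (rule hull_minimal) (rule convex_hp)
  then show ?thesis using assms(3) by auto
qed

lemma AA_ne: assumes "e \<in> E" shows "\<exists>b. b \<in> AA e"
proof -
  have "axis (xe e) 1 - axis (ye e) 1 \<in> Vs e" using xe_in[OF assms] ye_in[OF assms] unfolding Vs_def by (intro CollectI exI conjI) (rule refl)
  then have "axis (xe e) 1 - axis (ye e) 1 \<in> AA e" unfolding AA_def by (rule hull_inc)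
  then show ?thesis by (rule exI)
qed

lemma UU_Ub: "UU \<subseteq> Ub"
proof
  fix g assume "g \<in> UU"
  then have eq: "\<And>x y. sgn (g$x - g$y) = sgn (f0$x - f0$y)" by (simp add: UU_def)
  { fix x y assume le: "f0$x \<le> f0$y"
    have "sgn (f0$x - f0$y) \<noteq> 1" using le by (simp add: sgn_if)
    then have "sgn (g$x - g$y) \<noteq> 1" using eq by simp
    then have "g$x \<le> g$y" by (simp add: sgn_if split: if_splits) }
  then show "g \<in> Ub" unfolding Ub_def by blast
qed

lemma f0_UU: "f0 \<in> UU" by (simp add: UU_def)

lemma Ub_pert: assumes "F \<in> Ub" "\<epsilon> > 0" shows "F + \<epsilon> *\<^sub>R f0 \<in> UU"
proof -
  { fix x y
    have eqd: "(F + \<epsilon> *\<^sub>R f0)$x - (F + \<epsilon> *\<^sub>R f0)$y = (F$x - F$y) + \<epsilon> * (f0$x - f0$y)"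
      by (simp add: algebra_simps)
    have "sgn ((F + \<epsilon> *\<^sub>R f0)$x - (F + \<epsilon> *\<^sub>R f0)$y) = sgn (f0$x - f0$y)"
    proof (cases "f0$x < f0$y")
      case True
      then have "F$x \<le> F$y" using assms(1) by (auto simp: Ub_def)
      moreover have "\<epsilon> * (f0$x - f0$y) < 0" using True assms(2) by (simp add: mult_pos_neg)
      ultimately show ?thesis unfolding eqd using True by (simp add: sgn_if)
    next
      case False
      show ?thesis
      proof (cases "f0$x = f0$y")
        case True
        then have "F$x \<le> F$y" "F$y \<le> F$x" using assms(1) by (auto simp: Ub_def)
        then show ?thesis unfolding eqd using True by (simp add: sgn_if)
      next
        case False2: False
        then have lt: "f0$y < f0$x" using False by auto
        then have "F$y \<le> F$x" using assms(1) by (auto simp: Ub_def)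
        moreover have "\<epsilon> * (f0$x - f0$y) > 0" using lt assms(2) by simp
        ultimately show ?thesis unfolding eqd using lt by (simp add: sgn_if)
      qed
    qed }
  then show ?thesis by (simp add: UU_def)
qed

definition "SS e = {(axis x 1 - axis y 1) :: real^'n | x y. x \<in> e \<and> y \<in> e}"

lemma Bset_SS: "Bset e = convex hull (SS e)" by (simp add: Bset_def SS_def)

lemma SS_fin: "finite (SS e)"
proof -
  have "SS e = (\<lambda>(x,y). (axis x 1 - axis y 1) :: real^'n) ` (e \<times> e)" unfolding SS_def by auto
  then show ?thesis by simp
qed

lemma Vs_SS: "Vs e \<subseteq> SS e" unfolding Vs_def SS_def Tp_def Bt_def by blast

lemma AA_Bset: "AA e \<subseteq> Bset e" unfolding AA_def Bset_SS by (rule hull_mono[OF Vs_SS])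

lemma convex_hs: "convex {z::real^'n. z \<bullet> g \<le> c}"
proof -
  have "{z::real^'n. z \<bullet> g \<le> c} = {z. g \<bullet> z \<le> c}" by (auto simp: inner_commute)
  then show ?thesis using convex_halfspace_le[of g c] by simp
qed

lemma Bset_le: assumes "f \<in> Ub" "e \<in> E" "b \<in> Bset e" shows "b \<bullet> f \<le> ell e f"
proof -
  have "SS e \<subseteq> {z. z \<bullet> f \<le> ell e f}"
  proof
    fix z :: "real^'n" assume "z \<in> SS e"
    then obtain x y where z: "z = axis x 1 - axis y 1" "x \<in> e" "y \<in> e" unfolding SS_def by blast
    have "f0$x \<le> f0$(xe e)" using xe_in[OF assms(2)] z(2) unfolding Tp_def by blast
    then have "f$x \<le> f$(xe e)" using assms(1) unfolding Ub_def by blast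
    moreover have "f0$(ye e) \<le> f0$y" using ye_in[OF assms(2)] z(3) unfolding Bt_def by blast
    then have "f$(ye e) \<le> f$y" using assms(1) unfolding Ub_def by blast
    ultimately show "z \<in> {z. z \<bullet> f \<le> ell e f}" unfolding z(1) by (simp add: inner_ax ell_def)
  qed
  then have "Bset e \<subseteq> {z. z \<bullet> f \<le> ell e f}" unfolding Bset_SS
    by (rule hull_minimal) (rule convex_hs)
  then show ?thesis using assms(3) by blast
qed

lemma AA_argmax: assumes "f \<in> Ub" "e \<in> E" shows "AA e \<subseteq> argmaxB e f"
proof
  fix b assume b: "b \<in> AA e"
  have "b \<in> Bset e" using b AA_Bset by blast
  moreover have "b \<bullet> f = ell e f" by (rule AA_inner[OF assms b])
  ultimately show "b \<in> argmaxB e f" unfolding argmaxB_def using Bset_le[OF assms] by auto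
qed

lemma argmax_AA: assumes "f \<in> UU" "e \<in> E" shows "argmaxB e f \<subseteq> AA e"
proof
  fix b assume bm: "b \<in> argmaxB e f"
  have fU: "f \<in> Ub" using assms(1) UU_Ub by blast
  have bB: "b \<in> Bset e" and bmax: "\<And>b'. b' \<in> Bset e \<Longrightarrow> b' \<bullet> f \<le> b \<bullet> f"
    using bm unfolding argmaxB_def by auto
  obtain a where a: "a \<in> AA e" using AA_ne[OF assms(2)] by blast
  have "a \<bullet> f = ell e f" by (rule AA_inner[OF fU assms(2) a])
  moreover have "a \<bullet> f \<le> b \<bullet> f" using a AA_Bset bmax by blast
  moreover have "b \<bullet> f \<le> ell e f" by (rule Bset_le[OF fU assms(2) bB])
  ultimately have bf: "b \<bullet> f = ell e f" by linarith
  define FF where "FF = Bset e \<inter> {x. f \<bullet> x = ell e f}"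
  have FFf: "FF face_of Bset e" unfolding FF_def
  proof (rule face_of_Int_supporting_hyperplane_le)
    show "convex (Bset e)" unfolding Bset_SS by (rule convex_convex_hull)
    fix x assume "x \<in> Bset e"
    then have "x \<bullet> f \<le> ell e f" using Bset_le[OF fU assms(2)] by blast
    then show "f \<bullet> x \<le> ell e f" by (metis inner_commute)
  qed
  then have FFf': "FF face_of convex hull (SS e)" by (simp add: Bset_SS)
  obtain S' where S': "S' \<subseteq> SS e" "FF = convex hull S'"
    by (rule face_of_convex_hull_subset[OF finite_imp_compact[OF SS_fin] FFf'])
  have "S' \<subseteq> Vs e"
  proof
    fix v assume v: "v \<in> S'"
    then have "v \<in> FF" unfolding S'(2) by (rule hull_inc)
    then have vf: "v \<bullet> f = ell e f" unfolding FF_def by (simp add: inner_commute)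
    have "v \<in> SS e" using v S'(1) by (rule subsetD[rotated])
    then obtain x y where z: "v = axis x 1 - axis y 1" "x \<in> e" "y \<in> e" unfolding SS_def by blast
    have "f0$x \<le> f0$(xe e)" using xe_in[OF assms(2)] z(2) unfolding Tp_def by blast
    then have l1: "f$x \<le> f$(xe e)" using fU unfolding Ub_def by blast
    have "f0$(ye e) \<le> f0$y" using ye_in[OF assms(2)] z(3) unfolding Bt_def by blast
    then have l2: "f$(ye e) \<le> f$y" using fU unfolding Ub_def by blast
    have "f$x - f$y = f$(xe e) - f$(ye e)" using vf unfolding z(1) by (simp add: inner_ax ell_def)
    then have e1: "f$x = f$(xe e)" and e2: "f$y = f$(ye e)" using l1 l2 by linarith+
    have sg: "\<And>p q. sgn (f$p - f$q) = sgn (f0$p - f0$q)" using assms(1) by (simp add: UU_def)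
    have "sgn (f0$x - f0$(xe e)) = 0" using sg[of x "xe e"] e1 by simp
    then have "f0$x = f0$(xe e)" by (simp add: sgn_eq_0_iff)
    then have "x \<in> Tp e" using xe_in[OF assms(2)] z(2) unfolding Tp_def by simp
    have "sgn (f0$y - f0$(ye e)) = 0" using sg[of y "ye e"] e2 by simp
    then have "f0$y = f0$(ye e)" by (simp add: sgn_eq_0_iff)
    then have "y \<in> Bt e" using ye_in[OF assms(2)] z(3) unfolding Bt_def by simp
    show "v \<in> Vs e" unfolding Vs_def z(1) using \<open>x \<in> Tp e\<close> \<open>y \<in> Bt e\<close> by (intro CollectI exI conjI) (rule refl)
  qed
  then have "FF \<subseteq> AA e" unfolding S'(2) AA_def by (rule hull_mono)
  moreover have "b \<in> FF" unfolding FF_def using bB bf by (simp add: inner_commute)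
  ultimately show "b \<in> AA e" by blast
qed

definition "Gp lam = {Dmat d F + lam *\<^sub>R (\<Sum>e\<in>E. w e *\<^sub>R (ell e F *\<^sub>R b e)) | F b. F \<in> Ub \<and> (\<forall>e\<in>E. b e \<in> AA e)}"

lemma Gop_Gp: assumes "f \<in> UU" shows "Gop E w d lam f \<subseteq> Gp lam"
proof
  fix y assume "y \<in> Gop E w d lam f"
  then obtain v where y: "y = Dmat d f + lam *\<^sub>R v" and v: "v \<in> Lap E w f" unfolding Gop_def by blast
  obtain b where vb: "v = (\<Sum>e\<in>E. w e *\<^sub>R ((b e \<bullet> f) *\<^sub>R b e))" and b: "\<forall>e\<in>E. b e \<in> argmaxB e f"
    using v unfolding Lap_def by blast
  have fU: "f \<in> Ub" using assms UU_Ub by blast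
  have bA: "\<forall>e\<in>E. b e \<in> AA e" using b argmax_AA[OF assms] by blast
  have "v = (\<Sum>e\<in>E. w e *\<^sub>R (ell e f *\<^sub>R b e))" unfolding vb
    by (rule sum.cong) (auto simp: AA_inner[OF fU] bA)
  then show "y \<in> Gp lam" unfolding Gp_def y using fU bA by blast
qed

lemma Dmat_add: "Dmat d (f + g) = Dmat d f + Dmat d g"
  by (simp add: Dmat_def vec_eq_iff algebra_simps)
lemma Dmat_scale: "Dmat d (c *\<^sub>R f) = c *\<^sub>R Dmat d f"
  by (simp add: Dmat_def vec_eq_iff algebra_simps)

lemma Gp_closure: "Gp lam \<subseteq> closure (\<Union>f\<in>UU. Gop E w d lam f)"
proof
  fix y assume "y \<in> Gp lam"
  then obtain F b where y: "y = Dmat d F + lam *\<^sub>R (\<Sum>e\<in>E. w e *\<^sub>R (ell e F *\<^sub>R b e))"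
    and F: "F \<in> Ub" and bA: "\<forall>e\<in>E. b e \<in> AA e" unfolding Gp_def by blast
  define q where "q = Dmat d f0 + lam *\<^sub>R (\<Sum>e\<in>E. w e *\<^sub>R (ell e f0 *\<^sub>R b e))"
  have near: "y + \<epsilon> *\<^sub>R q \<in> (\<Union>f\<in>UU. Gop E w d lam f)" if ep: "\<epsilon> > 0" for \<epsilon>
  proof -
    define f where "f = F + \<epsilon> *\<^sub>R f0"
    have fUU: "f \<in> UU" unfolding f_def by (rule Ub_pert[OF F ep])
    have fU: "f \<in> Ub" using fUU UU_Ub by blast
    have bm: "\<forall>e\<in>E. b e \<in> argmaxB e f" using bA AA_argmax[OF fU] by blast
    have "(\<Sum>e\<in>E. w e *\<^sub>R ((b e \<bullet> f) *\<^sub>R b e)) = (\<Sum>e\<in>E. w e *\<^sub>R (ell e f *\<^sub>R b e))"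
      by (rule sum.cong) (auto simp: AA_inner[OF fU] bA)
    also have "\<dots> = (\<Sum>e\<in>E. w e *\<^sub>R (ell e F *\<^sub>R b e)) + \<epsilon> *\<^sub>R (\<Sum>e\<in>E. w e *\<^sub>R (ell e f0 *\<^sub>R b e))"
      unfolding f_def ell_add ell_scale
      by (simp add: scaleR_add_left scaleR_add_right sum.distrib scaleR_sum_right mult.left_commute)
    finally have L: "(\<Sum>e\<in>E. w e *\<^sub>R ((b e \<bullet> f) *\<^sub>R b e)) = (\<Sum>e\<in>E. w e *\<^sub>R (ell e F *\<^sub>R b e)) + \<epsilon> *\<^sub>R (\<Sum>e\<in>E. w e *\<^sub>R (ell e f0 *\<^sub>R b e))" .
    have "(\<Sum>e\<in>E. w e *\<^sub>R ((b e \<bullet> f) *\<^sub>R b e)) \<in> Lap E w f" unfolding Lap_def using bm by blast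
    then have "Dmat d f + lam *\<^sub>R (\<Sum>e\<in>E. w e *\<^sub>R ((b e \<bullet> f) *\<^sub>R b e)) \<in> Gop E w d lam f"
      unfolding Gop_def by blast
    moreover have "Dmat d f + lam *\<^sub>R (\<Sum>e\<in>E. w e *\<^sub>R ((b e \<bullet> f) *\<^sub>R b e)) = y + \<epsilon> *\<^sub>R q"
      unfolding L unfolding y q_def f_def Dmat_add Dmat_scale by (simp add: algebra_simps)
    ultimately have "y + \<epsilon> *\<^sub>R q \<in> Gop E w d lam f" by simp
    then show ?thesis by (rule UN_I[OF fUU])
  qed
  show "y \<in> closure (\<Union>f\<in>UU. Gop E w d lam f)" unfolding closure_approachable
  proof (intro allI impI)
    fix \<delta> :: real assume dp: "\<delta> > 0"
    define \<epsilon> where "\<epsilon> = \<delta> / (norm q + 1)"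
    have np: "norm q + 1 > 0" using norm_ge_zero[of q] by linarith
    have ep: "\<epsilon> > 0" unfolding \<epsilon>_def by (rule divide_pos_pos[OF dp np])
    have "dist (y + \<epsilon> *\<^sub>R q) y = norm (\<epsilon> *\<^sub>R q)" unfolding dist_norm by (rule arg_cong[where f=norm]) simp
    also have "\<dots> = \<epsilon> * norm q" using ep by simp
    also have "\<dots> < \<delta>"
    proof -
      have "\<epsilon> * norm q < \<epsilon> * (norm q + 1)" using ep by simp
      also have "\<dots> = \<delta>" unfolding \<epsilon>_def using np by simp
      finally show ?thesis .
    qed
    finally show "\<exists>z\<in>\<Union>f\<in>UU. Gop E w d lam f. dist z y < \<delta>" by (rule rev_bexI[OF near[OF ep]])
  qed
qed

lemma Gp_scale: assumes "y \<in> Gp lam" "c \<ge> 0" shows "c *\<^sub>R y \<in> Gp lam"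
proof -
  obtain F b where y: "y = Dmat d F + lam *\<^sub>R (\<Sum>e\<in>E. w e *\<^sub>R (ell e F *\<^sub>R b e))"
    and F: "F \<in> Ub" and bA: "\<forall>e\<in>E. b e \<in> AA e" using assms(1) unfolding Gp_def by blast
  have cF: "c *\<^sub>R F \<in> Ub" using F assms(2) unfolding Ub_def by (auto intro: mult_left_mono)
  have "c *\<^sub>R y = Dmat d (c *\<^sub>R F) + lam *\<^sub>R (\<Sum>e\<in>E. w e *\<^sub>R (ell e (c *\<^sub>R F) *\<^sub>R b e))"
    unfolding y Dmat_scale ell_scale by (simp add: scaleR_add_right scaleR_sum_right mult.left_commute)
  then show ?thesis unfolding Gp_def using cF bA by blast
qed

lemma Gp_add: assumes "y1 \<in> Gp lam" "y2 \<in> Gp lam" shows "y1 + y2 \<in> Gp lam"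
proof -
  obtain F1 b1 where y1: "y1 = Dmat d F1 + lam *\<^sub>R (\<Sum>e\<in>E. w e *\<^sub>R (ell e F1 *\<^sub>R b1 e))"
    and F1: "F1 \<in> Ub" and bA1: "\<forall>e\<in>E. b1 e \<in> AA e" using assms(1) unfolding Gp_def by blast
  obtain F2 b2 where y2: "y2 = Dmat d F2 + lam *\<^sub>R (\<Sum>e\<in>E. w e *\<^sub>R (ell e F2 *\<^sub>R b2 e))"
    and F2: "F2 \<in> Ub" and bA2: "\<forall>e\<in>E. b2 e \<in> AA e" using assms(2) unfolding Gp_def by blast
  define F where "F = F1 + F2"
  have FU: "F \<in> Ub" using F1 F2 unfolding Ub_def F_def by (auto intro: add_mono)
  define b where "b e = (if ell e F = 0 then b1 e else (ell e F1 / ell e F) *\<^sub>R b1 e + (ell e F2 / ell e F) *\<^sub>R b2 e)" for e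
  have key: "ell e F *\<^sub>R b e = ell e F1 *\<^sub>R b1 e + ell e F2 *\<^sub>R b2 e \<and> b e \<in> AA e" if e: "e \<in> E" for e
  proof -
    have n1: "ell e F1 \<ge> 0" by (rule ell_nonneg[OF F1 e])
    have n2: "ell e F2 \<ge> 0" by (rule ell_nonneg[OF F2 e])
    have s: "ell e F = ell e F1 + ell e F2" unfolding F_def by (rule ell_add)
    show ?thesis
    proof (cases "ell e F = 0")
      case True
      then have "ell e F1 = 0" "ell e F2 = 0" using n1 n2 s by linarith+
      then show ?thesis using True bA1 e unfolding b_def by simp
    next
      case False
      then have pos: "ell e F > 0" using n1 n2 s by linarith
      have "ell e F *\<^sub>R b e = ell e F1 *\<^sub>R b1 e + ell e F2 *\<^sub>R b2 e"
        unfolding b_def using False by (simp add: scaleR_add_right)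
      moreover have "b e \<in> AA e"
      proof -
        have cv: "convex (AA e)" unfolding AA_def by (rule convex_convex_hull)
        have "ell e F1 / ell e F + ell e F2 / ell e F = 1" using pos s by (simp add: add_divide_distrib[symmetric])
        moreover have "ell e F1 / ell e F \<ge> 0" "ell e F2 / ell e F \<ge> 0" using n1 n2 pos by simp_all
        ultimately have "(ell e F1 / ell e F) *\<^sub>R b1 e + (ell e F2 / ell e F) *\<^sub>R b2 e \<in> AA e"
          using cv bA1 bA2 e unfolding convex_def by blast
        then show ?thesis unfolding b_def using False by simp
      qed
      ultimately show ?thesis by blast
    qed
  qed
  have "(\<Sum>e\<in>E. w e *\<^sub>R (ell e F *\<^sub>R b e)) = (\<Sum>e\<in>E. w e *\<^sub>R (ell e F1 *\<^sub>R b1 e) + w e *\<^sub>R (ell e F2 *\<^sub>R b2 e))"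
    by (rule sum.cong) (simp_all add: key scaleR_add_right)
  also have "\<dots> = (\<Sum>e\<in>E. w e *\<^sub>R (ell e F1 *\<^sub>R b1 e)) + (\<Sum>e\<in>E. w e *\<^sub>R (ell e F2 *\<^sub>R b2 e))"
    by (rule sum.distrib)
  finally have S: "(\<Sum>e\<in>E. w e *\<^sub>R (ell e F *\<^sub>R b e)) = (\<Sum>e\<in>E. w e *\<^sub>R (ell e F1 *\<^sub>R b1 e)) + (\<Sum>e\<in>E. w e *\<^sub>R (ell e F2 *\<^sub>R b2 e))" .
  have "y1 + y2 = Dmat d F + lam *\<^sub>R (\<Sum>e\<in>E. w e *\<^sub>R (ell e F *\<^sub>R b e))"
    unfolding S unfolding y1 y2 F_def Dmat_add by (simp add: algebra_simps)
  moreover have "\<forall>e\<in>E. b e \<in> AA e" using key by blast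
  ultimately show ?thesis unfolding Gp_def using FU by blast
qed

definition "bsel e = (SOME b. b \<in> AA e)"
lemma bsel: "e \<in> E \<Longrightarrow> bsel e \<in> AA e" unfolding bsel_def using AA_ne by (metis someI_ex)

definition "one = ((\<chi> x. (1::real)) :: real^'n)"
definition "hh x = ((\<chi> y. if f0$x \<le> f0$y then (1::real) else 0) :: real^'n)"

lemma ell_one: "ell e (c *\<^sub>R one) = 0" by (simp add: ell_def one_def)
lemma ell_one1: "ell e one = 0" by (simp add: ell_def one_def)
lemma one_Ub: "c *\<^sub>R one \<in> Ub" by (simp add: Ub_def one_def)
lemma hh_Ub: "hh x \<in> Ub" by (auto simp: Ub_def hh_def)

lemma Gp_one: "Dmat d (c *\<^sub>R one) \<in> Gp lam"
proof -
  have "Dmat d (c *\<^sub>R one) = Dmat d (c *\<^sub>R one) + lam *\<^sub>R (\<Sum>e\<in>E. w e *\<^sub>R (ell e (c *\<^sub>R one) *\<^sub>R bsel e))"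
    by (simp add: ell_one)
  then show ?thesis unfolding Gp_def using one_Ub bsel by blast
qed

lemma Gp_zero: "0 \<in> Gp lam"
proof -
  have "Dmat d (0 *\<^sub>R one) = 0" by (simp add: Dmat_def vec_eq_iff)
  then show ?thesis using Gp_one[of 0 lam] by simp
qed

lemma Gp_cone: "convex_cone (Gp lam)"
  unfolding convex_cone_iff using Gp_zero Gp_add Gp_scale by blast

lemma dec0: "\<forall>g. g \<in> Ub \<and> (\<forall>x. g$x \<ge> 0) \<and> card {x. g$x \<noteq> 0} = N \<longrightarrow>
   (\<exists>t. (\<forall>x. t x \<ge> 0) \<and> g = (\<Sum>x\<in>UNIV. t x *\<^sub>R hh x))"
proof (induction N rule: less_induct)
  case (less N)
  show ?case
  proof (intro allI impI, elim conjE)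
    fix g :: "real^'n" assume gU: "g \<in> Ub" and gp: "\<forall>x. g$x \<ge> 0" and cN: "card {x. g$x \<noteq> 0} = N"
    define S where "S = {x. g$x \<noteq> 0}"
    show "\<exists>t. (\<forall>x. t x \<ge> 0) \<and> g = (\<Sum>x\<in>UNIV. t x *\<^sub>R hh x)"
    proof (cases "S = {}")
      case True
      then have "g = 0" unfolding S_def by (auto simp: vec_eq_iff)
      then show ?thesis by (intro exI[of _ "\<lambda>x. 0"]) simp
    next
      case False
      have fS: "finite S" by simp
      define m where "m = Min ((\<lambda>x. f0$x) ` S)"
      have "m \<in> (\<lambda>x. f0$x) ` S" unfolding m_def using False fS by (intro Min_in) auto
      then obtain x1 where x1: "x1 \<in> S" "f0$x1 = m" by auto
      have gx1: "g$x1 > 0" using x1(1) gp unfolding S_def by (metis less_eq_real_def mem_Collect_eq)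
      have mem: "f0$x1 \<le> f0$y \<longleftrightarrow> y \<in> S" for y
      proof
        assume "f0$x1 \<le> f0$y"
        then have "g$x1 \<le> g$y" using gU unfolding Ub_def by blast
        then show "y \<in> S" using gx1 unfolding S_def by simp
      next
        assume "y \<in> S"
        then show "f0$x1 \<le> f0$y" unfolding x1(2) m_def using fS by simp
      qed
      define s where "s = g$x1"
      have sle: "y \<in> S \<Longrightarrow> s \<le> g$y" for y using mem[of y] gU unfolding Ub_def s_def by blast
      have hh1: "hh x1 $ y = (if y \<in> S then 1 else 0)" for y unfolding hh_def using mem[of y] by simp
      define g' where "g' = g - s *\<^sub>R hh x1"
      have g'c: "g'$y = (if y \<in> S then g$y - s else 0)" for y
        unfolding g'_def using hh1[of y] by (simp add: S_def)
      have g'p: "\<forall>x. g'$x \<ge> 0" using sle g'c by simp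
      have g'U: "g' \<in> Ub" unfolding Ub_def
      proof (intro CollectI allI impI)
        fix y z assume yz: "f0$y \<le> f0$z"
        show "g'$y \<le> g'$z"
        proof (cases "y \<in> S")
          case True
          then have "z \<in> S" using mem yz by (meson order_trans)
          moreover have "g$y \<le> g$z" using gU yz unfolding Ub_def by blast
          ultimately show ?thesis using True g'c by simp
        next
          case False
          then show ?thesis using g'c g'p by simp
        qed
      qed
      have sub: "{x. g'$x \<noteq> 0} \<subseteq> S - {x1}" using g'c by (auto simp: s_def)
      have "card {x. g'$x \<noteq> 0} \<le> card (S - {x1})" using sub by (intro card_mono) auto
      also have "\<dots> < card S" by (rule card_Diff1_less[OF fS x1(1)])
      finally have "card {x. g'$x \<noteq> 0} < N" using cN unfolding S_def by simp
      then obtain t' where t': "\<forall>x. t' x \<ge> 0" "g' = (\<Sum>x\<in>UNIV. t' x *\<^sub>R hh x)"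
        using less.IH g'U g'p by blast
      define t where "t x = t' x + (if x = x1 then s else 0)" for x
      have tp: "\<forall>x. t x \<ge> 0" using t'(1) gx1 unfolding t_def s_def by simp
      have "(\<Sum>x\<in>UNIV. t x *\<^sub>R hh x) = (\<Sum>x\<in>UNIV. t' x *\<^sub>R hh x + (if x = x1 then s *\<^sub>R hh x else 0))"
        by (rule sum.cong) (auto simp: t_def scaleR_add_left)
      also have "\<dots> = (\<Sum>x\<in>UNIV. t' x *\<^sub>R hh x) + (\<Sum>x\<in>UNIV. (if x = x1 then s *\<^sub>R hh x else 0))"
        by (rule sum.distrib)
      also have "\<dots> = g' + s *\<^sub>R hh x1" using t'(2) by simp
      also have "\<dots> = g" unfolding g'_def by simp
      finally show ?thesis using tp by blast
    qed
  qed
qed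

lemma dec: assumes "F \<in> Ub" shows "\<exists>c t. (\<forall>x. t x \<ge> 0) \<and> F = c *\<^sub>R one + (\<Sum>x\<in>UNIV. t x *\<^sub>R hh x)"
proof -
  define c where "c = Min (range (\<lambda>x. F$x))"
  have cle: "c \<le> F$x" for x unfolding c_def by simp
  define g where "g = F - c *\<^sub>R one"
  have gc: "g$x = F$x - c" for x unfolding g_def one_def by simp
  have gp: "\<forall>x. g$x \<ge> 0" using cle gc by simp
  have gU: "g \<in> Ub" using assms unfolding Ub_def by (simp add: gc)
  obtain t where t: "\<forall>x. t x \<ge> 0" "g = (\<Sum>x\<in>UNIV. t x *\<^sub>R hh x)" using dec0 gU gp by blast
  have "F = c *\<^sub>R one + g" unfolding g_def by simp
  then show ?thesis using t by blast
qed

definition "gfun x p = (Dmat d (hh x), (\<Sum>e\<in>E. (w e * ell e (hh x)) *\<^sub>R p e))"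
definition "Gens = {(Dmat d one, 0), (- Dmat d one, 0)} \<union> (\<lambda>(x,p). gfun x p) ` (UNIV \<times> PiE E Vs)"
definition "Sl lam = (\<lambda>(a,b). a + lam *\<^sub>R b) ` Gens"

lemma Gens_fin: "finite Gens"
proof -
  have "finite (PiE E Vs)" using finE by (rule finite_PiE) (rule finite_subset[OF Vs_SS SS_fin])
  then show ?thesis unfolding Gens_def by simp
qed

lemma Sl_fin: "finite (Sl lam)" unfolding Sl_def using Gens_fin by simp

lemma Dmat_neg: "Dmat d (- f) = - Dmat d f" by (simp add: Dmat_def vec_eq_iff)

lemma Sl_Gp: "Sl lam \<subseteq> Gp lam"
proof
  fix z assume "z \<in> Sl lam"
  then obtain a b where ab: "(a,b) \<in> Gens" "z = a + lam *\<^sub>R b" unfolding Sl_def by auto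
  show "z \<in> Gp lam"
  proof (cases "(a,b) \<in> {(Dmat d one, 0), (- Dmat d one, 0)}")
    case True
    then have "z = Dmat d (1 *\<^sub>R one) \<or> z = Dmat d ((-1) *\<^sub>R one)" using ab(2) by (auto simp: Dmat_neg)
    then show ?thesis using Gp_one by blast
  next
    case False
    then obtain x p where xp: "p \<in> PiE E Vs" "(a,b) = gfun x p" using ab(1) unfolding Gens_def by auto
    have "z = Dmat d (hh x) + lam *\<^sub>R (\<Sum>e\<in>E. w e *\<^sub>R (ell e (hh x) *\<^sub>R p e))"
      using xp(2) ab(2) unfolding gfun_def by simp
    moreover have "\<forall>e\<in>E. p e \<in> AA e" using xp(1) unfolding AA_def by (auto intro: hull_inc)
    ultimately show ?thesis unfolding Gp_def using hh_Ub by blast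
  qed
qed

lemma hull_Gp: "convex_cone hull (Sl lam) \<subseteq> Gp lam"
  by (rule hull_minimal[where S=convex_cone, OF Sl_Gp Gp_cone])

lemma ell_sum: "ell e (\<Sum>x\<in>I. f x) = (\<Sum>x\<in>I. ell e (f x))"
  by (induction I rule: infinite_finite_induct) (auto simp: ell_add ell_def)

lemma Dmat_sum: "Dmat d (\<Sum>x\<in>I. f x) = (\<Sum>x\<in>I. Dmat d (f x))"
proof (induction I rule: infinite_finite_induct)
  case (infinite A)
  then show ?case by (simp add: Dmat_def vec_eq_iff)
next
  case empty
  then show ?case by (simp add: Dmat_def vec_eq_iff)
next
  case (insert x F)
  then show ?case by (simp add: Dmat_add)
qed

lemma Gp_hull: "Gp lam \<subseteq> convex_cone hull (Sl lam)"
proof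
  define C where "C = convex_cone hull (Sl lam)"
  have cc: "convex_cone C" unfolding C_def by (simp add: convex_cone_convex_cone_hull)
  have cvx: "convex C" using cc unfolding convex_cone_def by blast
  have SlC: "Sl lam \<subseteq> C" unfolding C_def by (rule hull_subset)
  have chC: "convex hull (Sl lam) \<subseteq> C" by (rule hull_minimal[where S=convex, OF SlC cvx])
  fix y assume "y \<in> Gp lam"
  then obtain F b where y: "y = Dmat d F + lam *\<^sub>R (\<Sum>e\<in>E. w e *\<^sub>R (ell e F *\<^sub>R b e))"
    and F: "F \<in> Ub" and bA: "\<forall>e\<in>E. b e \<in> AA e" unfolding Gp_def by blast
  obtain c t where t: "\<forall>x. t x \<ge> 0" and Fd: "F = c *\<^sub>R one + (\<Sum>x\<in>UNIV. t x *\<^sub>R hh x)"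
    using dec[OF F] by blast
  define zz where "zz x = Dmat d (hh x) + lam *\<^sub>R (\<Sum>e\<in>E. (w e * ell e (hh x)) *\<^sub>R b e)" for x
  have ellF: "ell e F = (\<Sum>x\<in>UNIV. t x * ell e (hh x))" for e
    unfolding Fd ell_add ell_one ell_sum ell_scale by (simp add: ell_one1)
  have "(\<Sum>e\<in>E. w e *\<^sub>R (ell e F *\<^sub>R b e)) = (\<Sum>e\<in>E. \<Sum>x\<in>UNIV. t x *\<^sub>R ((w e * ell e (hh x)) *\<^sub>R b e))"
    unfolding ellF by (simp add: scaleR_sum_left scaleR_sum_right mult.left_commute mult.assoc)
  also have "\<dots> = (\<Sum>x\<in>UNIV. t x *\<^sub>R (\<Sum>e\<in>E. (w e * ell e (hh x)) *\<^sub>R b e))"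
    by (subst sum.swap) (simp add: scaleR_sum_right)
  finally have Sx: "(\<Sum>e\<in>E. w e *\<^sub>R (ell e F *\<^sub>R b e)) = (\<Sum>x\<in>UNIV. t x *\<^sub>R (\<Sum>e\<in>E. (w e * ell e (hh x)) *\<^sub>R b e))" .
  have yeq: "y = Dmat d (c *\<^sub>R one) + (\<Sum>x\<in>UNIV. t x *\<^sub>R zz x)"
    unfolding y Sx unfolding Fd zz_def Dmat_add Dmat_sum Dmat_scale
    by (simp add: scaleR_add_right sum.distrib scaleR_sum_right mult.left_commute)
  have zzC: "zz x \<in> C" for x
  proof -
    define a where "a = Dmat d (hh x)"
    define sc where "sc e = w e * ell e (hh x)" for e
    have "(\<Sum>e\<in>E. sc e *\<^sub>R b e) \<in> convex hull ((\<lambda>p. \<Sum>e\<in>E. sc e *\<^sub>R p e) ` PiE E Vs)"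
      using bA unfolding AA_def by (intro hull_sum finE) blast
    then have "a + lam *\<^sub>R (\<Sum>e\<in>E. sc e *\<^sub>R b e) \<in> (\<lambda>u. a + lam *\<^sub>R u) ` (convex hull ((\<lambda>p. \<Sum>e\<in>E. sc e *\<^sub>R p e) ` PiE E Vs))"
      by (rule imageI)
    also have "\<dots> = convex hull ((\<lambda>u. a + lam *\<^sub>R u) ` (\<lambda>p. \<Sum>e\<in>E. sc e *\<^sub>R p e) ` PiE E Vs)"
      by (rule convex_hull_affinity[symmetric])
    also have "\<dots> \<subseteq> convex hull (Sl lam)"
    proof (rule hull_mono, rule subsetI)
      fix v assume "v \<in> (\<lambda>u. a + lam *\<^sub>R u) ` (\<lambda>p. \<Sum>e\<in>E. sc e *\<^sub>R p e) ` PiE E Vs"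
      then obtain p where p: "p \<in> PiE E Vs" "v = a + lam *\<^sub>R (\<Sum>e\<in>E. sc e *\<^sub>R p e)" by blast
      have "gfun x p \<in> Gens" unfolding Gens_def using p(1) by blast
      moreover have "v = (\<lambda>(a,b). a + lam *\<^sub>R b) (gfun x p)" unfolding p(2) gfun_def a_def sc_def by simp
      ultimately show "v \<in> Sl lam" unfolding Sl_def by (rule rev_image_eqI)
    qed
    finally show ?thesis using chC unfolding zz_def a_def sc_def by blast
  qed
  have sumC: "(\<Sum>x\<in>UNIV. t x *\<^sub>R zz x) \<in> C"
    using cc by (rule cc_sum) (use cc zzC t in \<open>auto simp: convex_cone_iff\<close>)
  have D1: "Dmat d one \<in> C" and D2: "- Dmat d one \<in> C"
  proof -
    have "(Dmat d one, 0) \<in> Gens" "(- Dmat d one, 0) \<in> Gens" unfolding Gens_def by auto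
    then have "Dmat d one \<in> Sl lam" "- Dmat d one \<in> Sl lam" unfolding Sl_def by (force+)
    then show "Dmat d one \<in> C" "- Dmat d one \<in> C" using SlC by auto
  qed
  have cC: "Dmat d (c *\<^sub>R one) \<in> C"
  proof (cases "c \<ge> 0")
    case True
    then show ?thesis using cc D1 unfolding Dmat_scale convex_cone_iff by blast
  next
    case False
    then have m: "-c \<ge> 0" by simp
    have "(-c) *\<^sub>R (- Dmat d one) \<in> C" using cc D2 m unfolding convex_cone_iff by blast
    then show ?thesis unfolding Dmat_scale by simp
  qed
  show "y \<in> convex_cone hull (Sl lam)" unfolding yeq C_def[symmetric]
    using cc cC sumC by (simp add: convex_cone_add)
qed

lemma main_eq: "closure (\<Union>f\<in>UU. Gop E w d lam f) = convex_cone hull (Sl lam)"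
proof
  have "(\<Union>f\<in>UU. Gop E w d lam f) \<subseteq> convex_cone hull (Sl lam)" using Gop_Gp Gp_hull by blast
  then show "closure (\<Union>f\<in>UU. Gop E w d lam f) \<subseteq> convex_cone hull (Sl lam)"
    by (rule closure_minimal) (rule closed_convex_cone_hull[OF Sl_fin])
  show "convex_cone hull (Sl lam) \<subseteq> closure (\<Union>f\<in>UU. Gop E w d lam f)"
    using hull_Gp Gp_closure by blast
qed

lemma Gens_K: assumes "real_subfield K" "\<forall>e\<in>E. w e \<in> K" "\<forall>x. d x \<in> K" "ab \<in> Gens"
  shows "fst ab $ y \<in> K \<and> snd ab $ y \<in> K"
proof -
  have Z: "\<And>a. a \<in> \<int> \<Longrightarrow> a \<in> K" using sub_Ints[OF assms(1)] by blast
  have M: "\<And>a b. a \<in> K \<Longrightarrow> b \<in> K \<Longrightarrow> a * b \<in> K" using assms(1) unfolding real_subfield_def by blast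
  have N: "\<And>a. a \<in> K \<Longrightarrow> - a \<in> K" using assms(1) unfolding real_subfield_def by blast
  have dK: "d y \<in> K" using assms(3) by blast
  show ?thesis
  proof (cases "ab \<in> {(Dmat d one, 0), (- Dmat d one, 0)}")
    case True
    then show ?thesis using dK N Z[of 0] by (auto simp: Dmat_def one_def)
  next
    case False
    then obtain x p where xp: "p \<in> PiE E Vs" "ab = gfun x p" using assms(4) unfolding Gens_def by auto
    have hI: "hh x $ z \<in> \<int>" for z unfolding hh_def by simp
    have "fst ab $ y = d y * hh x $ y" using xp(2) by (simp add: gfun_def Dmat_def)
    then have f: "fst ab $ y \<in> K" using M[OF dK Z[OF hI]] by simp
    have "snd ab $ y = (\<Sum>e\<in>E. w e * ell e (hh x) * p e $ y)" using xp(2) by (simp add: gfun_def sum_component)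
    also have "\<dots> \<in> K"
    proof (rule sub_sum[OF assms(1)], intro ballI)
      fix e assume e: "e \<in> E"
      have "ell e (hh x) \<in> \<int>" unfolding ell_def using hI by (intro Ints_diff)
      moreover have "p e $ y \<in> \<int>"
      proof -
        have "p e \<in> Vs e" using xp(1) e by blast
        then obtain u v where "p e = axis u 1 - axis v 1" unfolding Vs_def by blast
        then show ?thesis by (simp add: axis_def)
      qed
      ultimately show "w e * ell e (hh x) * p e $ y \<in> K" using M Z assms(2) e by blast
    qed
    finally show ?thesis using f by blast
  qed
qed

end

theorem mainTheorem18:
  fixes E :: "'n::finite set set" and w :: "'n set \<Rightarrow> real" and d :: "'n \<Rightarrow> real"
  assumes "is_gen_hypergraph E w d"
    and "U \<in> (order_classes :: (real^'n) set set)"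
  shows "\<exists>(k::nat) (P :: nat \<Rightarrow> 'n \<Rightarrow> real poly) (Q :: nat \<Rightarrow> 'n \<Rightarrow> real poly).
           (\<forall>i<k. \<forall>x. poly_over (Kfield E w d) (P i x) \<and> poly_over (Kfield E w d) (Q i x)
                    \<and> (\<forall>z::real. z > 0 \<longrightarrow> poly (Q i x) z \<noteq> 0)) \<and>
           (\<forall>lam::real. lam > 0 \<longrightarrow>
              closure (\<Union>f\<in>U. Gop E w d lam f) =
              {(\<Sum>i<k. c i *\<^sub>R (\<chi> x. poly (P i x) lam / poly (Q i x) lam)) | c. \<forall>i<k. c i \<ge> 0})"
proof -
  obtain f0 :: "real^'n" where U: "U = {g. \<forall>x y. sgn (g $ x - g $ y) = sgn (f0 $ x - f0 $ y)}"
    using assms(2) unfolding order_classes_def by blast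
  interpret H: HG E w d f0 by unfold_locales (rule assms(1))
  have UU: "U = H.UU" unfolding U H.UU_def by simp
  obtain en where en: "bij_betw en {0..<card H.Gens} H.Gens"
    using ex_bij_betw_nat_finite[OF H.Gens_fin] by blast
  define k where "k = card H.Gens"
  have enG: "i < k \<Longrightarrow> en i \<in> H.Gens" for i using en unfolding k_def bij_betw_def by auto
  have enimg: "en ` {..<k} = H.Gens" using en unfolding k_def bij_betw_def by (simp add: lessThan_atLeast0)
  define P where "P i x = [: fst (en i) $ x, snd (en i) $ x :]" for i x
  define Q where "Q i x = (1 :: real poly)" for i :: nat and x :: 'n
  have KK: "real_subfield (Kfield E w d)" "\<forall>e\<in>E. w e \<in> Kfield E w d" "\<forall>x. d x \<in> Kfield E w d"
    using K_sub[of E w d] K_w[of w E d] K_d[of d E w] by blast+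
  have part1: "\<forall>i<k. \<forall>x. poly_over (Kfield E w d) (P i x) \<and> poly_over (Kfield E w d) (Q i x)
                    \<and> (\<forall>z::real. z > 0 \<longrightarrow> poly (Q i x) z \<noteq> 0)"
  proof (intro allI impI conjI)
    fix i x assume i: "i < k"
    have e: "fst (en i) $ x \<in> Kfield E w d \<and> snd (en i) $ x \<in> Kfield E w d"
      using H.Gens_K[OF KK enG[OF i]] by blast
    have z0: "0 \<in> Kfield E w d" and z1: "1 \<in> Kfield E w d" using KK(1) unfolding real_subfield_def by blast+
    show "poly_over (Kfield E w d) (P i x)" unfolding poly_over_def P_def
    proof
      fix j show "coeff [:fst (en i) $ x, snd (en i) $ x:] j \<in> Kfield E w d"
        using e z0 by (cases j; cases "j - 1") (auto simp: coeff_pCons)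
    qed
    show "poly_over (Kfield E w d) (Q i x)" unfolding poly_over_def Q_def
      using z0 z1 by (auto simp: coeff_1)
    show "\<And>z::real. z > 0 \<Longrightarrow> poly (Q i x) z \<noteq> 0" unfolding Q_def by simp
  qed
  have part2: "closure (\<Union>f\<in>U. Gop E w d lam f) =
              {(\<Sum>i<k. c i *\<^sub>R (\<chi> x. poly (P i x) lam / poly (Q i x) lam)) | c. \<forall>i<k. c i \<ge> 0}" for lam
  proof -
    define g where "g i = fst (en i) + lam *\<^sub>R snd (en i)" for i
    have gx: "(\<chi> x. poly (P i x) lam / poly (Q i x) lam) = g i" for i
      unfolding P_def Q_def g_def by (simp add: vec_eq_iff)
    have "H.Sl lam = g ` {..<k}" unfolding H.Sl_def enimg[symmetric] image_image g_def
      by (rule image_cong) (auto simp: case_prod_beta)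
    then have "closure (\<Union>f\<in>U. Gop E w d lam f) = convex_cone hull (g ` {..<k})"
      unfolding UU H.main_eq by simp
    then show ?thesis unfolding gx cone_explicit .
  qed
  show ?thesis using part1 part2 by blast
qed

end
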